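(* Let $M$ be a positive integer, $a=1/M$, and $N\ge 1$ a fixed interaction range. For a $2M$-periodic displacement $u=(u_\ell)_{\ell\in\mathbb{Z}}$ define the linearized continuum energy $$E^{c,lin}(u)=\sum_{\ell=-M+1}^{M}\sum_{\substack{k=-N\\k\neq 0}}^{N}\frac{a}{2}\Big(\frac{k^2}{2}(u'_\ell)^2\phi_{xx}(k)\Big)$$ and the linearized atomistic energy $$E^{a,lin}(u)=\sum_{\ell=-M+1}^{M}\sum_{\substack{k=-N\\k\neq 0}}^{N}\frac{a}{2}\Big(\frac12\Big(\frac{u_{\ell+k}-u_\ell}{a}\Big)^2\phi_{xx}(k)\Big),$$ where the deformed configuration is $y_\ell=x_\ell+u_\ell$ with $x_\ell=a\ell$. Then the consistency error between the linearized continuum energy and the linearized atomistic energy is $O(a^2)$, i.e. $E^{c,lin}(u)-E^{a,lin}(u)=O(a^2)$.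
   Context: $\phi:\mathbb{R}\to\mathbb{R}$ is a Lennard-Jones type pair potential with $\phi(r)=\phi(|r|)$, at least four times differentiable, $\phi_{xx}(1)>0$ and $\phi_{xx}(k)\le 0$ for $k\ge 2$; $\phi_{xx}$ denotes its second derivative. Displacements are $2M$-periodic: $u_{\ell+2M}=u_\ell$. The discrete derivative is $u'_\ell=(u_{\ell+1}-u_\ell)/a$. The $O(a^2)$ is understood as $a\to 0$ with $u$ given as the lattice values $u_\ell=\widetilde u(a\ell)$ of its smooth periodic interpolant $\widetilde u$ (the paper uses the periodic quintic spline interpolant, $C^4$ across nodes), the implied constant depending on $N$, $\phi$ and derivatives of $\widetilde u$. *)

theory Defs
  imports "HOL-Analysis.Analysis"
begin

definition phi_xx :: "(real \<Rightarrow> real) \<Rightarrow> real \<Rightarrow> real" where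
  "phi_xx phi r = (deriv ^^ 2) phi r"

definition lat_a :: "nat \<Rightarrow> real" where
  "lat_a M = 1 / real M"

definition ddiff :: "nat \<Rightarrow> (int \<Rightarrow> real) \<Rightarrow> int \<Rightarrow> real" where
  "ddiff M u l = (u (l + 1) - u l) / lat_a M"

definition E_c_lin :: "(real \<Rightarrow> real) \<Rightarrow> nat \<Rightarrow> nat \<Rightarrow> (int \<Rightarrow> real) \<Rightarrow> real" where
  "E_c_lin phi N M u =
     (\<Sum>l\<in>{-int M + 1..int M}. \<Sum>k\<in>{-int N..int N} - {0}.
        lat_a M / 2 * ((of_int k)^2 / 2 * (ddiff M u l)^2 * phi_xx phi (of_int k)))"

definition E_a_lin :: "(real \<Rightarrow> real) \<Rightarrow> nat \<Rightarrow> nat \<Rightarrow> (int \<Rightarrow> real) \<Rightarrow> real" where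
  "E_a_lin phi N M u =
     (\<Sum>l\<in>{-int M + 1..int M}. \<Sum>k\<in>{-int N..int N} - {0}.
        lat_a M / 2 * (1 / 2 * ((u (l + k) - u l) / lat_a M)^2 * phi_xx phi (of_int k)))"

end

theory Submission
  imports Defs
begin

lemma shift1:
  fixes f :: "int \<Rightarrow> real" and p lo :: int
  assumes "p > 0" "\<And>l. f (l + p) = f l"
  shows "(\<Sum>l\<in>{lo..lo+p-1}. f (l + 1)) = (\<Sum>l\<in>{lo..lo+p-1}. f l)"
proof -
  have "(\<Sum>l\<in>{lo..lo+p-1}. f (l + 1)) = (\<Sum>l\<in>{lo+1..lo+p}. f l)"
    by (rule sum.reindex_bij_witness[where i="\<lambda>l. l - 1" and j="\<lambda>l. l + 1"]) auto
  also have "{lo+1..lo+p} = insert (lo+p) {lo+1..lo+p-1}" using assms(1) by auto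
  also have "(\<Sum>l\<in>insert (lo+p) {lo+1..lo+p-1}. f l) = f (lo+p) + (\<Sum>l\<in>{lo+1..lo+p-1}. f l)"
    by (subst sum.insert) auto
  also have "{lo..lo+p-1} = insert lo {lo+1..lo+p-1}" using assms(1) by auto
  ultimately show ?thesis using assms(2)[of lo] by (simp add: add.commute)
qed

lemma shift_sum:
  fixes f :: "int \<Rightarrow> real" and p lo c :: int
  assumes "p > 0" "\<And>l. f (l + p) = f l"
  shows "(\<Sum>l\<in>{lo..lo+p-1}. f (l + c)) = (\<Sum>l\<in>{lo..lo+p-1}. f l)"
proof (induction c rule: int_induct[where k=0])
  case base then show ?case by simp
next
  case (step1 i)
  have "(\<Sum>l\<in>{lo..lo+p-1}. f (l + (i + 1))) = (\<Sum>l\<in>{lo..lo+p-1}. (\<lambda>x. f (x + i)) (l + 1))"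
    by (simp add: ac_simps)
  also have "\<dots> = (\<Sum>l\<in>{lo..lo+p-1}. f (l + i))"
    by (rule shift1[OF assms(1)]) (metis assms(2) add.assoc add.commute)
  finally show ?case using step1 by simp
next
  case (step2 i)
  have "(\<Sum>l\<in>{lo..lo+p-1}. f (l + i)) = (\<Sum>l\<in>{lo..lo+p-1}. (\<lambda>x. f (x + (i - 1))) (l + 1))"
    by (simp add: ac_simps)
  also have "\<dots> = (\<Sum>l\<in>{lo..lo+p-1}. f (l + (i - 1)))"
    by (rule shift1[OF assms(1)]) (metis assms(2) add.assoc add.commute)
  finally show ?case using step2 by simp
qed

lemma sq_sum_identity:
  fixes x :: "nat \<Rightarrow> real"
  shows "(\<Sum>j<m. x j)^2 = real m * (\<Sum>j<m. (x j)^2) - (1/2) * (\<Sum>i<m. \<Sum>j<m. (x i - x j)^2)"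
proof -
  have "(\<Sum>i<m. \<Sum>j<m. (x i - x j)^2) = (\<Sum>i<m. \<Sum>j<m. (x i)^2 + (x j)^2 - 2 * x i * x j)"
    by (simp add: power2_diff)
  also have "\<dots> = 2 * real m * (\<Sum>j<m. (x j)^2) - 2 * (\<Sum>j<m. x j)^2"
  proof -
    have e: "(\<Sum>j<m. x j * 2) = 2 * sum x {..<m}" by (simp add: sum_distrib_left mult.commute)
    show ?thesis
      by (simp add: sum.distrib sum_subtractf sum_distrib_left[symmetric] power2_eq_square sum_product algebra_simps e)
         (simp add: sum_distrib_left[symmetric] sum_distrib_right[symmetric] mult.commute)
  qed
  finally show ?thesis by linarith
qed

lemma telescope:
  fixes u :: "int \<Rightarrow> real"
  shows "u (l + int m) - u l = (\<Sum>j<m. u (l + int j + 1) - u (l + int j))"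
  by (induction m) (simp_all add: algebra_simps)

lemma mean_deriv:
  fixes f :: "real \<Rightarrow> real"
  assumes "\<And>x. f differentiable at x" "a > 0"
  shows "\<exists>z. t \<le> z \<and> z \<le> t + a \<and> (f (t + a) - f t) / a = deriv f z"
proof -
  have "\<exists>z. t < z \<and> z < t + a \<and> f (t + a) - f t = (t + a - t) * deriv f z"
    by (rule MVT2) (simp_all add: DERIV_deriv_iff_real_differentiable assms)
  then obtain z where "t < z" "z < t + a" "f (t + a) - f t = (t + a - t) * deriv f z" by blast
  then show ?thesis using assms(2) by (intro exI[of _ z]) auto
qed

lemma lip_deriv:
  fixes f :: "real \<Rightarrow> real"
  assumes "\<And>x. f differentiable at x" "\<And>z. lo \<le> z \<Longrightarrow> z \<le> hi \<Longrightarrow> \<bar>deriv f z\<bar> \<le> B"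
    and "lo \<le> x" "x \<le> hi" "lo \<le> y" "y \<le> hi"
  shows "\<bar>f x - f y\<bar> \<le> B * \<bar>x - y\<bar>"
proof -
  have *: "\<bar>f x - f y\<bar> \<le> B * \<bar>x - y\<bar>" if "lo \<le> x" "x \<le> hi" "lo \<le> y" "y \<le> hi" "y < x" for x y
  proof -
    have "\<exists>z. y < z \<and> z < x \<and> f x - f y = (x - y) * deriv f z"
      by (rule MVT2[OF \<open>y < x\<close>]) (simp add: DERIV_deriv_iff_real_differentiable assms(1))
    then obtain z where "y < z" "z < x" "f x - f y = (x - y) * deriv f z" by blast
    moreover have "\<bar>deriv f z\<bar> \<le> B" using assms(2) that \<open>y < z\<close> \<open>z < x\<close> by auto
    ultimately show ?thesis using that by (simp add: abs_mult mult.commute mult_right_mono)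
  qed
  consider "y < x" | "x < y" | "x = y" by linarith
  then show ?thesis
  proof cases
    case 1 then show ?thesis using * assms by blast
  next
    case 2 then show ?thesis using *[of y x] assms by (simp add: abs_minus_commute)
  next
    case 3 then show ?thesis using assms(2)[of x] assms by simp
  qed
qed


theorem proposition1:
  fixes phi :: "real \<Rightarrow> real" and ut :: "real \<Rightarrow> real" and N :: nat
  assumes N_pos: "N \<ge> 1"
    and phi_even: "\<And>r. phi r = phi \<bar>r\<bar>"
    and phi_diff: "\<And>j x. j < 4 \<Longrightarrow> x \<noteq> 0 \<Longrightarrow> (deriv ^^ j) phi differentiable (at x)"
    and phi_xx_1: "phi_xx phi 1 > 0"
    and phi_xx_k: "\<And>k::nat. k \<ge> 2 \<Longrightarrow> phi_xx phi (real k) \<le> 0"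
    and ut_per: "\<And>x. ut (x + 2) = ut x"
    and ut_diff: "\<And>j x. j < 4 \<Longrightarrow> (deriv ^^ j) ut differentiable (at x)"
    and ut_cont4: "continuous_on UNIV ((deriv ^^ 4) ut)"
  shows "\<exists>C. \<forall>M::nat. M \<ge> 1 \<longrightarrow>
           \<bar>E_c_lin phi N M (\<lambda>l. ut (lat_a M * of_int l))
            - E_a_lin phi N M (\<lambda>l. ut (lat_a M * of_int l))\<bar> \<le> C * (lat_a M)^2"
proof -
  have d0: "\<And>x. ut differentiable at x" using ut_diff[of 0] by simp
  have d1: "\<And>x. deriv ut differentiable at x" using ut_diff[of 1] by simp
  have d2: "\<And>x. deriv (deriv ut) differentiable at x" using ut_diff[of 2] by (simp add: numeral_2_eq_2)
  have "continuous_on {-1..real N + 1} (deriv (deriv ut))"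
    by (intro continuous_at_imp_continuous_on ballI differentiable_imp_continuous_within d2)
  then obtain B where B0: "B \<ge> 0" and Bb: "\<And>x. x \<in> {-1..real N + 1} \<Longrightarrow> norm (deriv (deriv ut) x) \<le> B"
    using continuous_on_compact_bound[OF compact_Icc] by metis
  have Bb': "\<bar>deriv (deriv ut) x\<bar> \<le> B" if "-1 \<le> x" "x \<le> real N + 1" for x
    using Bb[of x] that by simp
  define K where "K = {-int N..int N} - {0}"
  define C where "C = (\<Sum>k\<in>K. \<bar>phi_xx phi (of_int k)\<bar> * (of_int k)^4 * B^2 / 4)"
  show ?thesis
  proof (intro exI[of _ C] allI impI)
    fix M :: nat assume M1: "M \<ge> 1"
    define a where "a = lat_a M"
    define u where "u = (\<lambda>l::int. ut (a * of_int l))"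
    define w where "w = ddiff M u"
    define L where "L = {-int M + 1..int M}"
    have a0: "a > 0" and aM: "a * real M = 1" and a1: "a \<le> 1"
      using M1 by (auto simp: a_def lat_a_def)
    have uper: "u (l + 2 * int M) = u l" for l
    proof -
      have "a * of_int (l + 2 * int M) = a * of_int l + 2" using aM by (simp add: algebra_simps)
      then show ?thesis unfolding u_def using ut_per by simp
    qed
    have wdef: "w n = (u (n + 1) - u n) / a" for n unfolding w_def ddiff_def a_def by simp
    have wper: "w (l + 2 * int M) = w l" for l
      unfolding wdef using uper[of l] uper[of "l+1"] by (simp add: ac_simps)
    have Leq: "L = {(-int M + 1)..(-int M + 1) + 2 * int M - 1}" unfolding L_def by simp
    have cardL: "card L = 2 * M" unfolding L_def by simp
    have shiftL: "(\<Sum>l\<in>L. f (l + c)) = (\<Sum>l\<in>L. f l)" if "\<And>l. f (l + 2 * int M) = f l" for f :: "int \<Rightarrow> real" and c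
      unfolding Leq by (rule shift_sum) (use M1 that in auto)
    have wlip: "\<bar>w n1 - w n2\<bar> \<le> B * a * real m"
      if hyp: "-int M + 1 \<le> n1" "n1 \<le> int M + int N - 1" "-int M + 1 \<le> n2" "n2 \<le> int M + int N - 1"
         "\<bar>n1 - n2\<bar> + 1 \<le> int m" for n1 n2 m
    proof -
      have xi: "\<exists>z. a * of_int n \<le> z \<and> z \<le> a * of_int n + a \<and> w n = deriv ut z \<and> -1 \<le> z \<and> z \<le> real N + 1"
        if "-int M + 1 \<le> n" "n \<le> int M + int N - 1" for n
      proof -
        obtain z where z: "a * of_int n \<le> z" "z \<le> a * of_int n + a" "(ut (a * of_int n + a) - ut (a * of_int n)) / a = deriv ut z"
          using mean_deriv[OF d0 a0] by blast
        have "w n = deriv ut z" using z(3) unfolding wdef u_def by (simp add: algebra_simps)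
        moreover have "a * of_int n \<ge> a * (1 - real M)"
          using that a0 by (intro mult_left_mono) auto
        moreover have "a * of_int n \<le> a * (real M + real N - 1)"
          using that a0 by (intro mult_left_mono) auto
        moreover have "a * real N \<le> real N" using a0 a1 by (intro mult_left_le_one_le) auto
        ultimately show ?thesis using z aM by (intro exI[of _ z]) (auto simp: algebra_simps)
      qed
      obtain z1 where z1: "a * of_int n1 \<le> z1" "z1 \<le> a * of_int n1 + a" "w n1 = deriv ut z1" "-1 \<le> z1" "z1 \<le> real N + 1"
        using xi[OF hyp(1,2)] by blast
      obtain z2 where z2: "a * of_int n2 \<le> z2" "z2 \<le> a * of_int n2 + a" "w n2 = deriv ut z2" "-1 \<le> z2" "z2 \<le> real N + 1"
        using xi[OF hyp(3,4)] by blast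
      have e1: "\<bar>w n1 - w n2\<bar> \<le> B * \<bar>z1 - z2\<bar>"
        unfolding z1(3) z2(3) using lip_deriv[of "deriv ut" "-1" "real N + 1" B z1 z2] d1 Bb' z1 z2 by blast
      have e2: "\<bar>z1 - z2\<bar> \<le> a * (\<bar>of_int (n1 - n2)\<bar> + 1)"
      proof -
        have "\<bar>a * of_int n1 - a * of_int n2\<bar> = a * \<bar>of_int (n1 - n2)\<bar>"
          using a0 by (simp add: abs_mult right_diff_distrib[symmetric])
        moreover have "z1 - z2 \<le> \<bar>a * of_int n1 - a * of_int n2\<bar> + a"
          using z1(1,2) z2(1,2) abs_ge_self[of "a * of_int n1 - a * of_int n2"] by linarith
        moreover have "z2 - z1 \<le> \<bar>a * of_int n1 - a * of_int n2\<bar> + a"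
          using z1(1,2) z2(1,2) abs_ge_minus_self[of "a * of_int n1 - a * of_int n2"] by linarith
        ultimately show ?thesis by (simp add: abs_le_iff algebra_simps)
      qed
      have e3: "a * (\<bar>of_int (n1 - n2)\<bar> + 1) \<le> a * real m"
      proof -
        have "\<bar>real_of_int (n1 - n2)\<bar> + 1 \<le> real m" using hyp(5)
          by (metis of_int_1 of_int_abs of_int_add of_int_le_iff of_int_of_nat_eq)
        then show ?thesis using a0 by (intro mult_left_mono) auto
      qed
      have "B * \<bar>z1 - z2\<bar> \<le> B * (a * real m)"
        using e2 e3 B0 by (intro mult_left_mono) auto
      then show ?thesis using e1 by (simp add: mult.assoc)
    qed
    define Q where "Q m = (\<Sum>l\<in>L. (real m)^2 * (w l)^2 - ((u (l + int m) - u l) / a)^2)" for m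
    have Qb: "\<bar>Q m\<bar> \<le> (real m)^4 * B^2 * a" if m1: "1 \<le> m" "m \<le> N" for m
    proof -
      define R where "R = (\<Sum>l\<in>L. \<Sum>i<m. \<Sum>j<m. (w (l + int i) - w (l + int j))^2)"
      have D: "((u (l + int m) - u l) / a)^2 = real m * (\<Sum>j<m. (w (l + int j))^2)
                  - (1/2) * (\<Sum>i<m. \<Sum>j<m. (w (l + int i) - w (l + int j))^2)" for l
      proof -
        have "(u (l + int m) - u l) / a = (\<Sum>j<m. w (l + int j))"
          unfolding telescope wdef by (simp add: sum_divide_distrib ac_simps)
        then show ?thesis using sq_sum_identity[of "\<lambda>j. w (l + int j)" m] by simp
      qed
      have sw: "(\<Sum>l\<in>L. \<Sum>j<m. (w (l + int j))^2) = real m * (\<Sum>l\<in>L. (w l)^2)"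
      proof -
        have "(\<Sum>l\<in>L. \<Sum>j<m. (w (l + int j))^2) = (\<Sum>j<m. \<Sum>l\<in>L. (w (l + int j))^2)"
          by (rule sum.swap)
        also have "\<dots> = (\<Sum>j<m. \<Sum>l\<in>L. (w l)^2)"
          by (intro sum.cong refl shiftL[where f="\<lambda>l. (w l)^2"]) (simp add: wper)
        finally show ?thesis by simp
      qed
      have Qe: "Q m = R / 2"
        unfolding Q_def D R_def using sw
        by (simp add: sum_subtractf sum.distrib sum_distrib_left[symmetric] power2_eq_square algebra_simps)
      have R0: "R \<ge> 0" unfolding R_def by (intro sum_nonneg) auto
      have "R \<le> (\<Sum>l\<in>L. \<Sum>i<m. \<Sum>j<m. (B * a * real m)^2)"
        unfolding R_def
      proof (intro sum_mono)
        fix l i j assume l: "l \<in> L" and i: "i \<in> {..<m}" and j: "j \<in> {..<m}"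
        have "\<bar>w (l + int i) - w (l + int j)\<bar> \<le> B * a * real m"
          using l i j m1 by (intro wlip) (auto simp: L_def)
        then show "(w (l + int i) - w (l + int j))^2 \<le> (B * a * real m)^2"
          by (metis abs_ge_zero abs_le_square_iff abs_of_nonneg order_trans)
      qed
      also have "\<dots> = 2 * real M * real m ^ 2 * (B * a * real m)^2"
        using cardL by (simp add: power2_eq_square)
      also have "\<dots> = 2 * (real m)^4 * B^2 * a * (a * real M)"
        by (simp add: power2_eq_square power4_eq_xxxx algebra_simps)
      finally show ?thesis using Qe R0 aM by simp
    qed
    define S where "S k = (\<Sum>l\<in>L. (of_int k)^2 * (w l)^2 - ((u (l + k) - u l) / a)^2)" for k
    have Sb: "\<bar>S k\<bar> \<le> (of_int k)^4 * B^2 * a" if k: "k \<in> K" for k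
    proof (cases "k > 0")
      case True
      then have "S k = Q (nat k)" unfolding S_def Q_def by simp
      moreover have "1 \<le> nat k" "nat k \<le> N" using True k by (auto simp: K_def)
      ultimately show ?thesis using Qb[of "nat k"] True by simp
    next
      case False
      define m where "m = nat (- k)"
      have km: "k = - int m" and m1: "1 \<le> m" "m \<le> N" using False k by (auto simp: K_def m_def)
      have "S k = (\<Sum>l\<in>L. (real m)^2 * (w l)^2) - (\<Sum>l\<in>L. ((u (l + k + int m) - u (l + k)) / a)^2)"
        unfolding S_def sum_subtractf km
        by (intro arg_cong2[where f="(-)"] sum.cong refl) (simp_all add: power2_eq_square algebra_simps)
      also have "(\<Sum>l\<in>L. ((u (l + k + int m) - u (l + k)) / a)^2) = (\<Sum>l\<in>L. ((u (l + int m) - u l) / a)^2)"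
      proof -
        have per: "((u (l + 2 * int M + int m) - u (l + 2 * int M)) / a)^2 = ((u (l + int m) - u l) / a)^2" for l
          using uper[of "l + int m"] uper[of l] by (simp add: ac_simps)
        have "(\<Sum>l\<in>L. (\<lambda>l. ((u (l + int m) - u l) / a)^2) (l + k)) = (\<Sum>l\<in>L. (\<lambda>l. ((u (l + int m) - u l) / a)^2) l)"
          by (rule shiftL) (use per in simp)
        then show ?thesis by simp
      qed
      finally have "S k = Q m" unfolding Q_def sum_subtractf by simp
      then show ?thesis using Qb[OF m1] km by simp
    qed
    have "E_c_lin phi N M u - E_a_lin phi N M u
          = (\<Sum>l\<in>L. \<Sum>k\<in>K. a / 4 * phi_xx phi (of_int k) * ((of_int k)^2 * (w l)^2 - ((u (l + k) - u l) / a)^2))"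
      unfolding E_c_lin_def E_a_lin_def sum_subtractf[symmetric] L_def K_def a_def w_def
      by (intro sum.cong refl) (simp add: algebra_simps)
    also have "\<dots> = (\<Sum>k\<in>K. a / 4 * phi_xx phi (of_int k) * S k)"
      unfolding S_def by (subst sum.swap) (simp add: sum_distrib_left)
    finally have eq: "E_c_lin phi N M u - E_a_lin phi N M u = (\<Sum>k\<in>K. a / 4 * phi_xx phi (of_int k) * S k)" .
    have "\<bar>\<Sum>k\<in>K. a / 4 * phi_xx phi (of_int k) * S k\<bar> \<le> (\<Sum>k\<in>K. \<bar>a / 4 * phi_xx phi (of_int k) * S k\<bar>)"
      by (rule sum_abs)
    also have "\<dots> \<le> (\<Sum>k\<in>K. \<bar>phi_xx phi (of_int k)\<bar> * (of_int k)^4 * B^2 / 4 * a^2)"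
    proof (intro sum_mono)
      fix k assume k: "k \<in> K"
      have "\<bar>a / 4 * phi_xx phi (of_int k) * S k\<bar> = a / 4 * \<bar>phi_xx phi (of_int k)\<bar> * \<bar>S k\<bar>"
        using a0 by (simp add: abs_mult)
      also have "\<dots> \<le> a / 4 * \<bar>phi_xx phi (of_int k)\<bar> * ((of_int k)^4 * B^2 * a)"
        using Sb[OF k] a0 by (intro mult_left_mono) auto
      finally show "\<bar>a / 4 * phi_xx phi (of_int k) * S k\<bar> \<le> \<bar>phi_xx phi (of_int k)\<bar> * (of_int k)^4 * B^2 / 4 * a^2"
        by (simp add: power2_eq_square algebra_simps)
    qed
    also have "\<dots> = C * a^2" unfolding C_def by (simp add: sum_distrib_right)
    finally show "\<bar>E_c_lin phi N M (\<lambda>l. ut (lat_a M * of_int l))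
            - E_a_lin phi N M (\<lambda>l. ut (lat_a M * of_int l))\<bar> \<le> C * (lat_a M)^2"
      using eq unfolding u_def a_def by simp
  qed
qed

end
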